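(* Let $(a',b',c',d')\in\mathbb{Z}_{\ge0}^4$, let $t$ be an integer with $1\le t\le q_0-1$, and assume $\lVert(a',b',c',d')\rVert\le t(q+2q_0+1)$. Then there exists a unique $(a,b,c,d)\in\mathbb{Z}_{\ge0}^4$ with $b\in\{0,1\}$ and $\lVert(a,b,c,d)\rVert=\lVert(a',b',c',d')\rVert$.
   Context: $n\ge2$ is an integer, $q_0=2^n$, $q=2q_0^2$, and for $(a,b,c,d)\in\mathbb{Z}_{\ge0}^4$ one sets $\lVert(a,b,c,d)\rVert:=aq+b(q+q_0)+c(q+2q_0)+d(q+2q_0+1)$. *)

theory Defs
  imports Main
begin

definition q0 :: "nat \<Rightarrow> nat" where "q0 n = 2 ^ n"
definition qq :: "nat \<Rightarrow> nat" where "qq n = 2 * (q0 n)\<^sup>2"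

definition wnorm :: "nat \<Rightarrow> nat \<times> nat \<times> nat \<times> nat \<Rightarrow> nat" where
  "wnorm n v = (case v of (a, b, c, d) \<Rightarrow>
     a * qq n + b * (qq n + q0 n) + c * (qq n + 2 * q0 n) + d * (qq n + 2 * q0 n + 1))"

end

theory Submission
  imports Defs
begin

lemma decomp:
  fixes s a b c d :: nat
  assumes s: "s \<ge> 1" and m: "a+b+c+d < s"
    and N: "N = a*(2*s*s) + b*(2*s*s+s) + c*(2*s*s+2*s) + d*(2*s*s+2*s+1)"
  shows "N div (2*s*s) = a+b+c+d" and "(N mod (2*s*s)) div s = b+2*c+2*d"
    and "(N mod (2*s*s)) mod s = d"
proof -
  define R where "R = (b+2*c+2*d)*s + d"
  have N2: "N = (a+b+c+d)*(2*s*s) + R" unfolding N R_def by (simp add: algebra_simps)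
  have k: "b+2*c+2*d \<le> 2*(s-1)" using m by linarith
  have ds: "d < s" using m by linarith
  have "(b+2*c+2*d)*s \<le> 2*(s-1)*s" using k by (rule mult_right_mono) simp
  moreover have "2*(s-1)*s + d < 2*s*s"
  proof -
    obtain r where r: "s = r + 1" using s by (metis add.commute le_Suc_ex)
    show ?thesis using ds unfolding r by (simp add: algebra_simps)
  qed
  ultimately have "R < 2*s*s" unfolding R_def by linarith
  moreover have qp: "2*s*s \<noteq> 0" using s by simp
  ultimately have RL: "R < 2*s*s" "2*s*s \<noteq> 0" by blast+
  have "N = R + (a+b+c+d)*(2*s*s)" using N2 by simp
  then have "N div (2*s*s) = a+b+c+d" and M: "N mod (2*s*s) = R"
    using RL by simp_all
  then show "N div (2*s*s) = a+b+c+d" by simp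
  show "(N mod (2*s*s)) div s = b+2*c+2*d" "(N mod (2*s*s)) mod s = d"
    unfolding M R_def using ds by simp_all
qed

lemma wn: "wnorm n (a,b,c,d) = a*(2*q0 n*q0 n) + b*(2*q0 n*q0 n+q0 n)
   + c*(2*q0 n*q0 n+2*q0 n) + d*(2*q0 n*q0 n+2*q0 n+1)"
  by (simp add: wnorm_def qq_def power2_eq_square algebra_simps)

lemma uniq:
  fixes s a b c d a2 b2 c2 d2 :: nat
  assumes s: "s \<ge> 1" and m: "a+b+c+d < s" and m2: "a2+b2+c2+d2 < s"
    and b: "b \<le> 1" and b2: "b2 \<le> 1"
    and N: "N = a*(2*s*s) + b*(2*s*s+s) + c*(2*s*s+2*s) + d*(2*s*s+2*s+1)"
    and N2: "N = a2*(2*s*s) + b2*(2*s*s+s) + c2*(2*s*s+2*s) + d2*(2*s*s+2*s+1)"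
  shows "(a,b,c,d) = (a2,b2,c2,d2)"
proof -
  note A = decomp[OF s m N] and B = decomp[OF s m2 N2]
  have e1: "a+b+c+d = a2+b2+c2+d2" using A(1) B(1) by simp
  have e2: "b+2*c+2*d = b2+2*c2+2*d2" using A(2) B(2) by simp
  have e3: "d = d2" using A(3) B(3) by simp
  have "b = b2" using e2 b b2 by presburger
  then show ?thesis using e1 e2 e3 by auto
qed

theorem lemma3p2:
  fixes n t :: nat and a' b' c' d' :: nat
  assumes "n \<ge> 2"
    and "1 \<le> t" and "t \<le> q0 n - 1"
    and "wnorm n (a', b', c', d') \<le> t * (qq n + 2 * q0 n + 1)"
  shows "\<exists>!v :: nat \<times> nat \<times> nat \<times> nat.
           fst (snd v) \<in> {0, 1} \<and> wnorm n v = wnorm n (a', b', c', d')"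
proof -
  define s where "s = q0 n"
  have s1: "s \<ge> 1" unfolding s_def q0_def by simp
  define N where "N = wnorm n (a', b', c', d')"
  have Nb: "N \<le> (s-1) * (2*s*s + 2*s + 1)"
  proof -
    have "N \<le> t * (2*s*s + 2*s + 1)" using assms(4)
      unfolding N_def s_def qq_def power2_eq_square by (simp add: mult.assoc)
    also have "\<dots> \<le> (s-1) * (2*s*s + 2*s + 1)" using assms(3) s_def
      by (intro mult_right_mono) auto
    finally show ?thesis .
  qed
  have lt: "(s-1) * (2*s*s + 2*s + 1) < s * (2*s*s)"
  proof -
    obtain r where r: "s = r + 1" using s1 by (metis add.commute le_Suc_ex)
    show ?thesis unfolding r by (simp add: algebra_simps)
  qed
  have msmall: "a+b+c+d < s" if "wnorm n (a,b,c,d) = N" for a b c d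
  proof -
    have "(a+b+c+d) * (2*s*s) \<le> N" unfolding that[symmetric] wn s_def[symmetric]
      by (simp add: algebra_simps)
    with Nb lt have "(a+b+c+d) * (2*s*s) < s * (2*s*s)" by linarith
    thus ?thesis by (simp only: mult_less_cancel2)
  qed
  define v where "v = (a' + b' div 2, b' mod 2, c' + b' div 2, d')"
  have ev: "wnorm n v = N"
  proof -
    have g: "wnorm n (a'+h, r, c'+h, d') = wnorm n (a', 2*h+r, c', d')" for h r
      by (simp add: wn algebra_simps)
    have "2*(b' div 2) + b' mod 2 = b'" by simp
    thus ?thesis using g[of "b' div 2" "b' mod 2"] unfolding v_def N_def by simp
  qed
  show ?thesis
  proof (rule ex1I[of _ v])
    show "fst (snd v) \<in> {0, 1} \<and> wnorm n v = wnorm n (a', b', c', d')"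
      using ev unfolding v_def N_def by auto
  next
    fix w :: "nat \<times> nat \<times> nat \<times> nat"
    assume w: "fst (snd w) \<in> {0, 1} \<and> wnorm n w = wnorm n (a', b', c', d')"
    obtain a b c d where wd: "w = (a,b,c,d)" by (cases w) auto
    obtain a2 b2 c2 d2 where vd: "v = (a2,b2,c2,d2)" by (cases v) auto
    have b2: "b2 \<le> 1" using vd unfolding v_def by auto
    have b: "b \<le> 1" using w wd by auto
    have Nw: "wnorm n (a,b,c,d) = N" using w wd N_def by simp
    have Nv: "wnorm n (a2,b2,c2,d2) = N" using ev vd by simp
    show "w = v" unfolding wd vd
      by (rule uniq[OF s1 msmall[OF Nw] msmall[OF Nv] b b2,
            of N, unfolded s_def]) (use Nw Nv in \<open>simp_all add: wn\<close>)
  qed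
qed

end
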